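(* Let $G$ and $G'$ be temporal networks (with distinct event times) whose edge-labelled TEGs are isomorphic, and suppose the TEG may have several weakly connected components. Then $G'$ is obtained from $G$ by a relabelling of nodes together with a time translation applied independently to the events of each weakly connected component of the TEG. If moreover the vertices of the TEG are additionally labelled by their event times (and the isomorphism preserves these), then $G$ and $G'$ coincide up to relabelling of nodes, i.e. the time-stamped edge-labelled TEG uniquely defines the temporal network.
   Context: A temporal network consists of finitely many events $e_i=(u_i,v_i,t_i)$ with nodes $u_i\neq v_i$ and distinct times, indexed in increasing time order. The TEG is the directed graph with vertex set the events and an edge $(e_i,e_j)$ whenever $e_j$ is the first event after $e_i$ containing $u_i$, or the first event after $e_i$ containing $v_i$. Each edge is labelled by $\tau=t_j-t_i$ and by the motif $\mu\in\{\mathrm{ABAB},\mathrm{ABBA},\mathrm{ABAC},\mathrm{ABCA},\mathrm{ABBC},\mathrm{ABCB}\}$, the word obtained from $(u_i,v_i,u_j,v_j)$ by writing A for $u_i$, B for $v_i$ and C for any other node. The edge-labelled TEG is this directed graph with edge labels $(\tau,\mu)$ and the event data forgotten; isomorphism means a vertex bijection preserving edges and labels. *)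

theory Defs
  imports Complex_Main
begin

type_synonym 'v event = "'v \<times> 'v \<times> real"

definition src :: "'v event \<Rightarrow> 'v" where "src e = fst e"
definition dst :: "'v event \<Rightarrow> 'v" where "dst e = fst (snd e)"
definition tm :: "'v event \<Rightarrow> real" where "tm e = snd (snd e)"

definition temporal_network :: "'v event set \<Rightarrow> bool" where
  "temporal_network E \<longleftrightarrow> finite E \<and> (\<forall>e\<in>E. src e \<noteq> dst e) \<and> inj_on tm E"

definition nodes :: "'v event set \<Rightarrow> 'v set" where
  "nodes E = src ` E \<union> dst ` E"

definition contains :: "'v \<Rightarrow> 'v event \<Rightarrow> bool" where
  "contains x e \<longleftrightarrow> x = src e \<or> x = dst e"

definition first_after :: "'v event set \<Rightarrow> 'v \<Rightarrow> 'v event \<Rightarrow> 'v event \<Rightarrow> bool" where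
  "first_after E x e f \<longleftrightarrow> f \<in> E \<and> tm e < tm f \<and> contains x f \<and>
     (\<forall>g\<in>E. tm e < tm g \<and> tm g < tm f \<longrightarrow> \<not> contains x g)"

definition teg_edge :: "'v event set \<Rightarrow> 'v event \<Rightarrow> 'v event \<Rightarrow> bool" where
  "teg_edge E e f \<longleftrightarrow> e \<in> E \<and> (first_after E (src e) e f \<or> first_after E (dst e) e f)"

definition teg_rel :: "'v event set \<Rightarrow> ('v event \<times> 'v event) set" where
  "teg_rel E = {(e, f). teg_edge E e f}"

definition weakly_connected :: "'v event set \<Rightarrow> 'v event \<Rightarrow> 'v event \<Rightarrow> bool" where
  "weakly_connected E e f \<longleftrightarrow> (e, f) \<in> (teg_rel E \<union> (teg_rel E)\<inverse>)\<^sup>*"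

definition tau :: "'v event \<Rightarrow> 'v event \<Rightarrow> real" where
  "tau e f = tm f - tm e"

datatype mletter = A | B | C

definition mcode :: "'v event \<Rightarrow> 'v \<Rightarrow> mletter" where
  "mcode e x = (if x = src e then A else if x = dst e then B else C)"

definition motif :: "'v event \<Rightarrow> 'v event \<Rightarrow> mletter list" where
  "motif e f = [mcode e (src e), mcode e (dst e), mcode e (src f), mcode e (dst f)]"

definition teg_iso :: "'v event set \<Rightarrow> 'w event set \<Rightarrow> ('v event \<Rightarrow> 'w event) \<Rightarrow> bool" where
  "teg_iso E E' \<phi> \<longleftrightarrow> bij_betw \<phi> E E' \<and>
     (\<forall>e\<in>E. \<forall>f\<in>E. teg_edge E' (\<phi> e) (\<phi> f) \<longleftrightarrow> teg_edge E e f) \<and>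
     (\<forall>e\<in>E. \<forall>f\<in>E. teg_edge E e f \<longrightarrow>
        tau (\<phi> e) (\<phi> f) = tau e f \<and> motif (\<phi> e) (\<phi> f) = motif e f)"

end

theory Submission
  imports Defs
begin

definition corr :: "('v event \<Rightarrow> 'w event) \<Rightarrow> 'v event \<Rightarrow> 'v \<Rightarrow> 'w" where
  "corr \<phi> e x = (if x = src e then src (\<phi> e) else dst (\<phi> e))"

lemma motif_corr:
  assumes "teg_iso E E' \<phi>" "teg_edge E e g" "g \<in> E" "contains x e" "contains x g"
  shows "corr \<phi> e x = corr \<phi> g x"
proof -
  have e: "e \<in> E" using assms(2) unfolding teg_edge_def by auto
  have m: "motif (\<phi> e) (\<phi> g) = motif e g" using assms(1,2,3) e unfolding teg_iso_def by blast
  hence m3: "mcode (\<phi> e) (src (\<phi> g)) = mcode e (src g)"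
    and m4: "mcode (\<phi> e) (dst (\<phi> g)) = mcode e (dst g)" unfolding motif_def by auto
  have A: "mcode a y = A \<Longrightarrow> y = src a" for a :: "'w event" and y
    unfolding mcode_def by (auto split: if_splits)
  have Bc: "mcode a y = B \<Longrightarrow> y \<noteq> src a \<and> y = dst a" for a :: "'w event" and y
    unfolding mcode_def by (auto split: if_splits)
  have es: "x = src e \<or> x = dst e" and gs: "x = src g \<or> x = dst g"
    using assms(4,5) unfolding contains_def by auto
  show ?thesis
  proof (cases "x = src e")
    case xe: True
    show ?thesis
    proof (cases "x = src g")
      case True
      then have "mcode e (src g) = A" using xe unfolding mcode_def by simp
      then have "src (\<phi> g) = src (\<phi> e)" using m3 A by metis
      then show ?thesis using xe True unfolding corr_def by simp
    next
      case False
      then have xg: "x = dst g" using gs by simp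
      then have "mcode e (dst g) = A" using xe unfolding mcode_def by simp
      then have "dst (\<phi> g) = src (\<phi> e)" using m4 A by metis
      then show ?thesis using xe False unfolding corr_def by simp
    qed
  next
    case xe: False
    then have xd: "x = dst e" using es by simp
    show ?thesis
    proof (cases "x = src g")
      case True
      then have "mcode e (src g) = B" using xe xd unfolding mcode_def by simp
      then have "src (\<phi> g) = dst (\<phi> e)" using m3 Bc by metis
      then show ?thesis using xe True unfolding corr_def by simp
    next
      case False
      then have xg: "x = dst g" using gs by simp
      then have "mcode e (dst g) = B" using xe xd unfolding mcode_def by simp
      then have "dst (\<phi> g) = dst (\<phi> e)" using m4 Bc by metis
      then show ?thesis using xe False unfolding corr_def by simp
    qed
  qed
qed

lemma corr_consistent_aux:
  assumes tn: "temporal_network E" and iso: "teg_iso E E' \<phi>" and f: "f \<in> E" "contains x f"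
  shows "\<forall>e. e \<in> E \<longrightarrow> contains x e \<longrightarrow> tm e < tm f \<longrightarrow>
           card {g\<in>E. tm e < tm g \<and> tm g \<le> tm f} = n \<longrightarrow> corr \<phi> e x = corr \<phi> f x"
proof (induction n rule: less_induct)
  case (less n)
  show ?case
  proof (intro allI impI)
    fix e assume e: "e \<in> E" "contains x e" "tm e < tm f"
      and cn: "card {g\<in>E. tm e < tm g \<and> tm g \<le> tm f} = n"
    have fin: "finite E" using tn unfolding temporal_network_def by auto
    define S where "S = {g\<in>E. tm e < tm g \<and> contains x g}"
    have finS: "finite S" using fin unfolding S_def by auto
    have fS: "f \<in> S" using f e unfolding S_def by auto
    have "Min (tm ` S) \<in> tm ` S" using finS fS by (intro Min_in) auto
    then obtain g where gS: "g \<in> S" and gm: "tm g = Min (tm ` S)" by auto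
    have gmin: "\<forall>h\<in>S. tm g \<le> tm h" using gm finS by auto
    have fa: "first_after E x e g"
      unfolding first_after_def
    proof (intro conjI ballI impI)
      show "g \<in> E" "tm e < tm g" "contains x g" using gS unfolding S_def by auto
    next
      fix h assume "h \<in> E" "tm e < tm h \<and> tm h < tm g"
      show "\<not> contains x h"
      proof
        assume "contains x h"
        then have "h \<in> S" using \<open>h \<in> E\<close> \<open>tm e < tm h \<and> tm h < tm g\<close> unfolding S_def by blast
        then have "tm g \<le> tm h" using gmin by blast
        then show False using \<open>tm e < tm h \<and> tm h < tm g\<close> by linarith
      qed
    qed
    have xs: "x = src e \<or> x = dst e" using e(2) unfolding contains_def .
    have edge: "teg_edge E e g" unfolding teg_edge_def using e(1) fa xs by blast
    have gE: "g \<in> E" and gx: "contains x g" using gS unfolding S_def by auto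
    have c1: "corr \<phi> e x = corr \<phi> g x"
      using motif_corr[OF iso edge gE e(2) gx] .
    show "corr \<phi> e x = corr \<phi> f x"
    proof (cases "g = f")
      case True then show ?thesis using c1 by simp
    next
      case False
      have inj: "inj_on tm E" using tn unfolding temporal_network_def by auto
      have "tm g \<le> tm f" using gmin fS by blast
      moreover have "tm g \<noteq> tm f"
      proof
        assume "tm g = tm f"
        then have "g = f" using inj_onD[OF inj _ gE f(1)] by blast
        then show False using False by simp
      qed
      ultimately have lt: "tm g < tm f" by linarith
      have sub: "{h\<in>E. tm g < tm h \<and> tm h \<le> tm f} \<subset> {h\<in>E. tm e < tm h \<and> tm h \<le> tm f}"
      proof (rule psubsetI)
        show "{h\<in>E. tm g < tm h \<and> tm h \<le> tm f} \<subseteq> {h\<in>E. tm e < tm h \<and> tm h \<le> tm f}"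
          using gS unfolding S_def by auto
        have "g \<in> {h\<in>E. tm e < tm h \<and> tm h \<le> tm f}" using gS lt unfolding S_def by auto
        moreover have "g \<notin> {h\<in>E. tm g < tm h \<and> tm h \<le> tm f}" by simp
        ultimately show "{h\<in>E. tm g < tm h \<and> tm h \<le> tm f} \<noteq> {h\<in>E. tm e < tm h \<and> tm h \<le> tm f}" by blast
      qed
      have "card {h\<in>E. tm g < tm h \<and> tm h \<le> tm f} < n"
        using psubset_card_mono[OF _ sub] fin cn by simp
      hence "corr \<phi> g x = corr \<phi> f x"
        using less.IH gE gx lt by blast
      then show ?thesis using c1 by simp
    qed
  qed
qed

lemma corr_consistent:
  assumes tn: "temporal_network E" and iso: "teg_iso E E' \<phi>"
    and "e \<in> E" "contains x e" "f \<in> E" "contains x f"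
  shows "corr \<phi> e x = corr \<phi> f x"
proof -
  have inj: "inj_on tm E" using tn unfolding temporal_network_def by auto
  consider "e = f" | "tm e < tm f" | "tm f < tm e" using inj assms(3,5)
    unfolding inj_on_def by force
  then show ?thesis
  proof cases
    case 2 then show ?thesis using corr_consistent_aux[OF tn iso assms(5,6)] assms by blast
  next
    case 3 then show ?thesis using corr_consistent_aux[OF tn iso assms(3,4)] assms by metis
  qed simp
qed

lemma iso_inv:
  assumes "teg_iso E E' \<phi>"
  shows "teg_iso E' E (inv_into E \<phi>)"
proof -
  have b: "bij_betw \<phi> E E'" using assms unfolding teg_iso_def by auto
  have bi: "bij_betw (inv_into E \<phi>) E' E" using b by (rule bij_betw_inv_into)
  have ed: "\<forall>e\<in>E. \<forall>f\<in>E. teg_edge E' (\<phi> e) (\<phi> f) \<longleftrightarrow> teg_edge E e f"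
    and lab: "\<forall>e\<in>E. \<forall>f\<in>E. teg_edge E e f \<longrightarrow>
        tau (\<phi> e) (\<phi> f) = tau e f \<and> motif (\<phi> e) (\<phi> f) = motif e f"
    using assms unfolding teg_iso_def by auto
  have fi: "\<And>y. y \<in> E' \<Longrightarrow> \<phi> (inv_into E \<phi> y) = y" using b
    by (meson bij_betw_inv_into_right)
  have ii: "\<And>y. y \<in> E' \<Longrightarrow> inv_into E \<phi> y \<in> E" using bi bij_betwE by blast
  show ?thesis unfolding teg_iso_def
  proof (intro conjI ballI impI)
    show "bij_betw (inv_into E \<phi>) E' E" by (rule bi)
  next
    fix e f assume "e \<in> E'" "f \<in> E'"
    then show "teg_edge E (inv_into E \<phi> e) (inv_into E \<phi> f) = teg_edge E' e f"
      using ed ii fi by metis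
  next
    fix e f assume a: "e \<in> E'" "f \<in> E'" "teg_edge E' e f"
    then have "teg_edge E (inv_into E \<phi> e) (inv_into E \<phi> f)" using ed ii fi by metis
    then show "tau (inv_into E \<phi> e) (inv_into E \<phi> f) = tau e f"
      using lab ii fi a by metis
  next
    fix e f assume a: "e \<in> E'" "f \<in> E'" "teg_edge E' e f"
    then have "teg_edge E (inv_into E \<phi> e) (inv_into E \<phi> f)" using ed ii fi by metis
    then show "motif (inv_into E \<phi> e) (inv_into E \<phi> f) = motif e f"
      using lab ii fi a by metis
  qed
qed

theorem mainTheorem3:
  fixes E :: "'v event set" and E' :: "'w event set" and \<phi> :: "'v event \<Rightarrow> 'w event"
  assumes "temporal_network E" and "temporal_network E'"
    and "teg_iso E E' \<phi>"
  shows "(\<exists>(\<sigma> :: 'v \<Rightarrow> 'w) (\<delta> :: 'v event \<Rightarrow> real).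
            inj_on \<sigma> (nodes E) \<and>
            (\<forall>e\<in>E. \<forall>f\<in>E. weakly_connected E e f \<longrightarrow> \<delta> e = \<delta> f) \<and>
            bij_betw (\<lambda>e. (\<sigma> (src e), \<sigma> (dst e), tm e + \<delta> e)) E E')
       \<and> ((\<forall>e\<in>E. tm (\<phi> e) = tm e) \<longrightarrow>
            (\<exists>\<sigma> :: 'v \<Rightarrow> 'w. inj_on \<sigma> (nodes E) \<and>
               bij_betw (\<lambda>e. (\<sigma> (src e), \<sigma> (dst e), tm e)) E E'))"
proof -
  note tn = assms(1) and tn' = assms(2) and iso = assms(3)
  define \<sigma> where "\<sigma> x = corr \<phi> (SOME e. e \<in> E \<and> contains x e) x" for x
  have sig: "\<sigma> x = corr \<phi> e x" if "e \<in> E" "contains x e" for x e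
  proof -
    have "\<exists>e. e \<in> E \<and> contains x e" using that by blast
    then have "(SOME e. e \<in> E \<and> contains x e) \<in> E \<and> contains x (SOME e. e \<in> E \<and> contains x e)"
      by (rule someI_ex)
    then show ?thesis unfolding \<sigma>_def using corr_consistent[OF tn iso] that by blast
  qed
  have sd: "src e \<noteq> dst e" if "e \<in> E" for e using tn that unfolding temporal_network_def by auto
  have b: "bij_betw \<phi> E E'" using iso unfolding teg_iso_def by auto
  have phiE: "\<phi> e \<in> E'" if "e \<in> E" for e using b that bij_betwE by blast
  have sd': "src e \<noteq> dst e" if "e \<in> E'" for e using tn' that unfolding temporal_network_def by auto
  have ssrc: "\<sigma> (src e) = src (\<phi> e)" if "e \<in> E" for e
    using sig[OF that, of "src e"] unfolding contains_def corr_def by auto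
  have sdst: "\<sigma> (dst e) = dst (\<phi> e)" if "e \<in> E" for e
    using sig[OF that, of "dst e"] sd[OF that] unfolding contains_def corr_def by auto
  have phi_eq: "\<phi> e = (\<sigma> (src e), \<sigma> (dst e), tm (\<phi> e))" if "e \<in> E" for e
    using ssrc[OF that] sdst[OF that] unfolding src_def dst_def tm_def by (cases "\<phi> e") auto
  define \<psi> where "\<psi> = inv_into E \<phi>"
  have iso': "teg_iso E' E \<psi>" unfolding \<psi>_def by (rule iso_inv[OF iso])
  have psiphi: "\<psi> (\<phi> e) = e" if "e \<in> E" for e
    unfolding \<psi>_def using b that by (simp add: bij_betw_inv_into_left)
  have bck: "corr \<psi> (\<phi> e) (corr \<phi> e x) = x" if "e \<in> E" "contains x e" for e x
    using that psiphi[OF that(1)] sd[OF that(1)] sd'[OF phiE[OF that(1)]]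
    unfolding corr_def contains_def by auto
  have cphi: "contains (corr \<phi> e x) (\<phi> e)" for e x
    unfolding corr_def contains_def by auto
  have inj: "inj_on \<sigma> (nodes E)"
  proof (rule inj_onI)
    fix x y assume x: "x \<in> nodes E" and y: "y \<in> nodes E" and eq: "\<sigma> x = \<sigma> y"
    obtain e where e: "e \<in> E" "contains x e" using x unfolding nodes_def contains_def by auto
    obtain f where f: "f \<in> E" "contains y f" using y unfolding nodes_def contains_def by auto
    have w: "corr \<phi> e x = corr \<phi> f y" using eq sig e f by metis
    have "corr \<psi> (\<phi> e) (corr \<phi> e x) = corr \<psi> (\<phi> f) (corr \<phi> e x)"
      using corr_consistent[OF tn' iso' phiE[OF e(1)] cphi phiE[OF f(1)]] cphi w by metis
    then show "x = y" using bck[OF e] bck[OF f] w by metis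
  qed
  define \<delta> where "\<delta> e = tm (\<phi> e) - tm e" for e
  have dstep: "\<delta> e = \<delta> f" if "(e, f) \<in> teg_rel E \<union> (teg_rel E)\<inverse>" for e f
  proof -
    have tau: "tau (\<phi> a) (\<phi> c) = tau a c" if "teg_edge E a c" for a c
    proof -
      have "a \<in> E" "c \<in> E" using that unfolding teg_edge_def first_after_def by auto
      then show ?thesis using iso that unfolding teg_iso_def by blast
    qed
    from that consider "teg_edge E e f" | "teg_edge E f e" unfolding teg_rel_def by auto
    then show ?thesis
    proof cases
      case 1 then show ?thesis using tau[OF 1] unfolding tau_def \<delta>_def by linarith
    next
      case 2 then show ?thesis using tau[OF 2] unfolding tau_def \<delta>_def by linarith
    qed
  qed
  have dconst: "\<forall>e\<in>E. \<forall>f\<in>E. weakly_connected E e f \<longrightarrow> \<delta> e = \<delta> f"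
  proof (intro ballI impI)
    fix e f assume "e \<in> E" "f \<in> E" "weakly_connected E e f"
    then have "(e, f) \<in> (teg_rel E \<union> (teg_rel E)\<inverse>)\<^sup>*" unfolding weakly_connected_def by auto
    then show "\<delta> e = \<delta> f"
    proof (induction rule: rtrancl_induct)
      case (step y z) then show ?case using dstep[OF step(2)] by simp
    qed simp
  qed
  have bij1: "bij_betw (\<lambda>e. (\<sigma> (src e), \<sigma> (dst e), tm e + \<delta> e)) E E'"
  proof -
    have "bij_betw (\<lambda>e. (\<sigma> (src e), \<sigma> (dst e), tm e + \<delta> e)) E E' = bij_betw \<phi> E E'"
      by (rule bij_betw_cong) (use phi_eq in \<open>auto simp: \<delta>_def\<close>)
    then show ?thesis using b by simp
  qed
  have part2: "(\<forall>e\<in>E. tm (\<phi> e) = tm e) \<longrightarrow>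
            (\<exists>\<sigma> :: 'v \<Rightarrow> 'w. inj_on \<sigma> (nodes E) \<and>
               bij_betw (\<lambda>e. (\<sigma> (src e), \<sigma> (dst e), tm e)) E E')"
  proof
    assume t: "\<forall>e\<in>E. tm (\<phi> e) = tm e"
    have "bij_betw (\<lambda>e. (\<sigma> (src e), \<sigma> (dst e), tm e)) E E' = bij_betw \<phi> E E'"
      by (rule bij_betw_cong) (use phi_eq t in auto)
    then show "\<exists>\<sigma> :: 'v \<Rightarrow> 'w. inj_on \<sigma> (nodes E) \<and>
               bij_betw (\<lambda>e. (\<sigma> (src e), \<sigma> (dst e), tm e)) E E'"
      using b inj by auto
  qed
  show ?thesis using inj dconst bij1 part2 by blast
qed

end
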